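(* There exist absolute constants $C,c>0$ such that there exists a margin-$(c/\sqrt{k})$, relative-bias-$0$ embedding of $S_{n,k}$ in dimension $C k\log(n/k)$.
   Context: $S_{n,k}\in\{0,1\}^{\binom{n}{k}\times n}$ is the matrix whose rows are all the distinct vectors in $\{0,1\}^n$ with exactly $k$ ones, each appearing exactly once. For $A\in\{0,1\}^{N\times n}$ and $m\ge0$, unit vectors $U_1,\dots,U_N,V_1,\dots,V_n\in\mathbb{R}^d$ form a margin-$m$, relative-bias-$0$ embedding of $A$ in dimension $d$ if $\langle U_j,V_i\rangle\ge m$ whenever $A_{ji}=1$ and $\langle U_j,V_i\rangle\le -m$ whenever $A_{ji}=0$. *)

theory Defs
  imports Complex_Main
begin

text \<open>Vectors in R^d are represented as functions nat => real, of which only the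
  coordinates 0..<d are used.\<close>

definition ip :: "nat \<Rightarrow> (nat \<Rightarrow> real) \<Rightarrow> (nat \<Rightarrow> real) \<Rightarrow> real" where
  "ip d x y = (\<Sum>l<d. x l * y l)"

definition unit_vec :: "nat \<Rightarrow> (nat \<Rightarrow> real) \<Rightarrow> bool" where
  "unit_vec d x \<longleftrightarrow> ip d x x = 1"

text \<open>A 0/1 matrix with row index set R and columns 0..<n, given by its entries
  (True = 1, False = 0). Margin-m, relative-bias-0 embedding in dimension d.\<close>

definition margin_embedding ::
  "'r set \<Rightarrow> nat \<Rightarrow> ('r \<Rightarrow> nat \<Rightarrow> bool) \<Rightarrow> real \<Rightarrow> nat
     \<Rightarrow> ('r \<Rightarrow> nat \<Rightarrow> real) \<Rightarrow> (nat \<Rightarrow> nat \<Rightarrow> real) \<Rightarrow> bool" where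
  "margin_embedding R n A m d U V \<longleftrightarrow>
     (\<forall>j\<in>R. unit_vec d (U j)) \<and> (\<forall>i<n. unit_vec d (V i)) \<and>
     (\<forall>j\<in>R. \<forall>i<n. (A j i \<longrightarrow> ip d (U j) (V i) \<ge> m) \<and>
                     (\<not> A j i \<longrightarrow> ip d (U j) (V i) \<le> - m))"

text \<open>S_{n,k}: rows are all 0/1 vectors of length n with exactly k ones, each once.
  A row is identified with its support set J \<subseteq> {0..<n}, card J = k; entry (J,i) is 1 iff i \<in> J.\<close>

definition S_rows :: "nat \<Rightarrow> nat \<Rightarrow> nat set set" where
  "S_rows n k = {J. J \<subseteq> {..<n} \<and> card J = k}"

definition S_entry :: "nat set \<Rightarrow> nat \<Rightarrow> bool" where
  "S_entry J i \<longleftrightarrow> i \<in> J"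

end

theory Submission
  imports Defs "HOL-Analysis.Analysis"
begin


definition nbr :: "(nat \<times> nat \<Rightarrow> nat) \<Rightarrow> nat \<Rightarrow> nat \<Rightarrow> (nat \<times> nat) set" where
  "nbr h D l = (\<lambda>i. (i, h (l, i))) ` {..<D}"

definition nbrs :: "(nat \<times> nat \<Rightarrow> nat) \<Rightarrow> nat \<Rightarrow> nat set \<Rightarrow> (nat \<times> nat) set" where
  "nbrs h D S = (\<Union>l\<in>S. nbr h D l)"

definition good :: "(nat \<times> nat \<Rightarrow> nat) \<Rightarrow> nat \<Rightarrow> nat \<Rightarrow> nat \<Rightarrow> bool" where
  "good h n D k \<longleftrightarrow> (\<forall>S. S \<subseteq> {..<n} \<longrightarrow> card S \<le> 2*k \<longrightarrow> 11*D*card S \<le> 12*card (nbrs h D S))"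

lemma card_nbr: "card (nbr h D l) = D"
  unfolding nbr_def by (subst card_image) (auto simp: inj_on_def)

lemma finite_nbr[simp]: "finite (nbr h D l)"
  unfolding nbr_def by auto

lemma finite_nbrs[simp]: "finite S \<Longrightarrow> finite (nbrs h D S)"
  unfolding nbrs_def by auto

lemma card_nbrs_le: "finite S \<Longrightarrow> card (nbrs h D S) \<le> D * card S"
proof -
  assume f: "finite S"
  have "card (nbrs h D S) \<le> (\<Sum>l\<in>S. card (nbr h D l))"
    unfolding nbrs_def by (rule card_UN_le[OF f])
  also have "\<dots> = D * card S" by (simp add: card_nbr)
  finally show ?thesis .
qed

lemma nbrs_mono: "A \<subseteq> B \<Longrightarrow> nbrs h D A \<subseteq> nbrs h D B"
  unfolding nbrs_def by auto

lemma nbr_sub_nbrs: "l \<in> S \<Longrightarrow> nbr h D l \<subseteq> nbrs h D S"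
  unfolding nbrs_def by auto

lemma small_lemma:
  assumes g: "good h n D k" and k: "1 \<le> k" and D: "0 < D"
    and A: "A \<subseteq> {..<n}" and B: "B \<subseteq> {..<n}" and AB: "A \<inter> B = {}"
    and cA: "card A \<le> k"
    and Bp: "\<forall>b\<in>B. D < 4 * card (nbr h D b \<inter> nbrs h D A)"
  shows "2 * card B \<le> card A"
proof (rule ccontr)
  assume "\<not> 2 * card B \<le> card A"
  hence lt: "card A div 2 + 1 \<le> card B" by linarith
  have fB: "finite B" using B finite_subset by blast
  have fA: "finite A" using A finite_subset by blast
  obtain B' where B': "B' \<subseteq> B" "card B' = card A div 2 + 1"
    using obtain_subset_with_card_n[OF lt] by blast
  have fB': "finite B'" using B' fB finite_subset by blast
  define a where "a = card A"
  define b where "b = card B'"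
  have ab: "a + 1 \<le> 2 * b" unfolding a_def b_def using B' by linarith
  have dis: "A \<inter> B' = {}" using AB B' by blast
  have cS: "card (A \<union> B') = a + b" unfolding a_def b_def using card_Un_disjoint[OF fA fB' dis] .
  have "a + b \<le> 2 * k" using cA B' unfolding a_def b_def using k by linarith
  hence exp: "11 * D * (a + b) \<le> 12 * card (nbrs h D (A \<union> B'))"
  proof -
    have "A \<union> B' \<subseteq> {..<n}" using A B B'(1) by blast
    thus ?thesis using g cS \<open>a + b \<le> 2 * k\<close> unfolding good_def by metis
  qed
  have eq: "nbrs h D (A \<union> B') = nbrs h D A \<union> (\<Union>l\<in>B'. nbr h D l - nbrs h D A)"
    unfolding nbrs_def by blast
  have c1: "card (nbrs h D (A \<union> B')) \<le> card (nbrs h D A) + (\<Sum>l\<in>B'. card (nbr h D l - nbrs h D A))"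
    unfolding eq
    by (rule order_trans[OF card_Un_le], rule add_left_mono, rule card_UN_le[OF fB'])
  have c2: "4 * card (nbr h D l - nbrs h D A) + 1 \<le> 3 * D" if "l \<in> B'" for l
  proof -
    have "nbr h D l - nbrs h D A = nbr h D l - (nbr h D l \<inter> nbrs h D A)" by blast
    hence "card (nbr h D l - nbrs h D A) = D - card (nbr h D l \<inter> nbrs h D A)"
      using card_Diff_subset[of "nbr h D l \<inter> nbrs h D A" "nbr h D l"] by (simp add: card_nbr)
    moreover have "D < 4 * card (nbr h D l \<inter> nbrs h D A)" using Bp that B' by blast
    moreover have "card (nbr h D l \<inter> nbrs h D A) \<le> D"
      by (metis card_mono card_nbr finite_nbr inf.cobounded1)
    ultimately show ?thesis by linarith
  qed
  have "4 * (\<Sum>l\<in>B'. card (nbr h D l - nbrs h D A)) + b \<le> (\<Sum>l\<in>B'. 3 * D)"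
    unfolding b_def sum_distrib_left card_eq_sum sum.distrib[symmetric]
    by (rule sum_mono) (use c2 in \<open>auto simp: mult.commute\<close>)
  hence c3: "4 * (\<Sum>l\<in>B'. card (nbr h D l - nbrs h D A)) + b \<le> 3 * D * b"
    unfolding b_def by (simp add: mult.commute)
  have c4: "card (nbrs h D A) \<le> D * a" unfolding a_def by (rule card_nbrs_le[OF fA])
  have "12 * card (nbrs h D (A \<union> B')) + 3 * b \<le> 12 * D * a + 9 * D * b"
    using c1 c3 c4 by linarith
  hence "11 * D * (a + b) + 3 * b \<le> 12 * D * a + 9 * D * b" using exp by linarith
  hence "2 * D * b + 3 * b \<le> D * a" by (simp add: algebra_simps)
  moreover have "D * (a + 1) \<le> D * (2 * b)" using ab by (rule mult_left_mono) simp
  ultimately have "D * a + D + 3 * b \<le> D * a" by (simp add: algebra_simps)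
  thus False using D by linarith
qed



fun seqJL :: "(nat \<times> nat \<Rightarrow> nat) \<Rightarrow> nat \<Rightarrow> nat \<Rightarrow> nat set \<Rightarrow> nat \<Rightarrow> nat set \<times> nat set" where
  "seqJL h D n J 0 = (J, {..<n} - J)"
| "seqJL h D n J (Suc t) =
    (let Jt = fst (seqJL h D n J t); Lt = snd (seqJL h D n J t);
         L' = {l\<in>Lt. D < 4 * card (nbr h D l \<inter> nbrs h D Jt)};
         J' = {j\<in>Jt. D < 4 * card (nbr h D j \<inter> nbrs h D L')}
     in (J', L'))"

definition "Js h D n J t = fst (seqJL h D n J t)"
definition "Ls h D n J t = snd (seqJL h D n J t)"

lemma Js0: "Js h D n J 0 = J" and Ls0: "Ls h D n J 0 = {..<n} - J"
  unfolding Js_def Ls_def by auto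

lemma LsS: "Ls h D n J (Suc t) = {l\<in>Ls h D n J t. D < 4 * card (nbr h D l \<inter> nbrs h D (Js h D n J t))}"
  unfolding Js_def Ls_def by (simp add: Let_def)

lemma JsS: "Js h D n J (Suc t) = {j\<in>Js h D n J t. D < 4 * card (nbr h D j \<inter> nbrs h D (Ls h D n J (Suc t)))}"
  unfolding Js_def Ls_def by (simp add: Let_def)

lemma Js_sub: "Js h D n J (Suc t) \<subseteq> Js h D n J t" using JsS by blast
lemma Ls_sub: "Ls h D n J (Suc t) \<subseteq> Ls h D n J t" using LsS by blast

lemma Js_mono: "s \<le> t \<Longrightarrow> Js h D n J t \<subseteq> Js h D n J s"
  by (induction t) (auto simp: le_Suc_eq dest: Js_sub[THEN subsetD])

lemma Ls_mono: "s \<le> t \<Longrightarrow> Ls h D n J t \<subseteq> Ls h D n J s"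
  by (induction t) (auto simp: le_Suc_eq dest: Ls_sub[THEN subsetD])

lemma Js_J: "Js h D n J t \<subseteq> J" using Js_mono[of 0 t] by (simp add: Js0)
lemma Ls_L: "Ls h D n J t \<subseteq> {..<n} - J" using Ls_mono[of 0 t] by (simp add: Ls0)

lemma Js_card:
  assumes g: "good h n D k" and k: "1 \<le> k" and D: "0 < D" and J: "J \<subseteq> {..<n}" "card J \<le> k"
  shows "card (Js h D n J t) * 4 ^ t \<le> card J"
proof (induction t)
  case 0 then show ?case by (simp add: Js0)
next
  case (Suc t)
  let ?J = "Js h D n J t" and ?L = "Ls h D n J (Suc t)" and ?J' = "Js h D n J (Suc t)"
  have fJ: "finite J" using J finite_subset by blast
  have cJt: "card ?J \<le> k" using card_mono[OF fJ Js_J[of h D n J t]] J by linarith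
  have JtS: "?J \<subseteq> {..<n}" using Js_J J by blast
  have LS: "?L \<subseteq> {..<n}" using Ls_L by blast
  have 1: "2 * card ?L \<le> card ?J"
    apply (rule small_lemma[OF g k D JtS LS])
    using Js_J Ls_L apply blast
     apply (rule cJt)
    by (auto simp: LsS[of h D n J t])
  have 2: "2 * card ?J' \<le> card ?L"
    apply (rule small_lemma[OF g k D LS])
    using Js_J J apply blast
    using Js_J Ls_L apply blast
    using 1 cJt apply linarith
    by (auto simp: JsS[of h D n J t])
  have "card ?J' * 4 ^ Suc t = (4 * card ?J') * 4 ^ t" by simp
  also have "\<dots> \<le> card ?J * 4 ^ t" using 1 2 by (intro mult_right_mono) linarith+
  also have "\<dots> \<le> card J" using Suc .
  finally show ?case .
qed

lemma Js_empty:
  assumes g: "good h n D k" and k: "1 \<le> k" and D: "0 < D" and J: "J \<subseteq> {..<n}" "card J \<le> k"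
  shows "Js h D n J k = {}"
proof -
  have "card (Js h D n J k) * 4 ^ k \<le> k" using Js_card[OF assms, of k] J by linarith
  moreover have "k < 4 ^ k" by (induction k) auto
  ultimately have "card (Js h D n J k) * 4 ^ k < 1 * 4 ^ k" by linarith
  hence "card (Js h D n J k) = 0" by (simp only: mult_less_cancel2) simp
  moreover have "finite (Js h D n J k)" using J Js_J finite_subset by (meson finite_lessThan)
  ultimately show ?thesis by simp
qed

lemma step_exists: "P 0 \<Longrightarrow> \<not> P k \<Longrightarrow> \<exists>t<k. P t \<and> \<not> P (Suc t)"
  by (induction k) (auto simp: less_Suc_eq)

definition "Rset h D n J k = (\<Union>t<k. nbrs h D (Js h D n J t) - nbrs h D (Ls h D n J (Suc t)))"

lemma Rset_props:
  assumes g: "good h n D k" and k: "1 \<le> k" and D: "0 < D" and J: "J \<subseteq> {..<n}" "card J \<le> k"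
  shows "Rset h D n J k \<subseteq> nbrs h D J"
    and "\<And>j. j \<in> J \<Longrightarrow> 3 * D \<le> 4 * card (nbr h D j \<inter> Rset h D n J k)"
    and "\<And>l. l < n \<Longrightarrow> l \<notin> J \<Longrightarrow> 4 * card (nbr h D l \<inter> Rset h D n J k) \<le> D"
proof -
  let ?R = "Rset h D n J k"
  let ?J = "Js h D n J" and ?L = "Ls h D n J"
  have fJ: "finite J" using J finite_subset by blast
  show sub: "?R \<subseteq> nbrs h D J"
    unfolding Rset_def using nbrs_mono[OF Js_J] by blast
  have fR: "finite ?R" using finite_subset[OF sub finite_nbrs[OF fJ]] .
  have emp: "?J k = {}" using Js_empty[OF assms] .
  show "3 * D \<le> 4 * card (nbr h D j \<inter> ?R)" if j: "j \<in> J" for j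
  proof -
    have "\<exists>t<k. j \<in> ?J t \<and> j \<notin> ?J (Suc t)"
      by (rule step_exists[of "\<lambda>t. j \<in> ?J t"]) (use j emp Js0 in auto)
    then obtain t where t: "t < k" "j \<in> ?J t" "j \<notin> ?J (Suc t)" by blast
    have c: "4 * card (nbr h D j \<inter> nbrs h D (?L (Suc t))) \<le> D"
      using t JsS[of h D n J t] by auto
    have "nbr h D j - nbrs h D (?L (Suc t)) \<subseteq> nbr h D j \<inter> ?R"
      unfolding Rset_def using t nbr_sub_nbrs[of j "?J t" h D] by blast
    hence c2: "card (nbr h D j - nbrs h D (?L (Suc t))) \<le> card (nbr h D j \<inter> ?R)"
      by (intro card_mono) (auto simp: fR)
    have "nbr h D j - nbrs h D (?L (Suc t)) = nbr h D j - (nbr h D j \<inter> nbrs h D (?L (Suc t)))" by blast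
    hence "card (nbr h D j - nbrs h D (?L (Suc t))) = D - card (nbr h D j \<inter> nbrs h D (?L (Suc t)))"
      using card_Diff_subset[of "nbr h D j \<inter> nbrs h D (?L (Suc t))" "nbr h D j"] by (simp add: card_nbr)
    thus ?thesis using c c2 by linarith
  qed
  show "4 * card (nbr h D l \<inter> ?R) \<le> D" if l: "l < n" "l \<notin> J" for l
  proof -
    have Lk: "?L (Suc k) = {}" using LsS[of h D n J k] emp D by (simp add: nbrs_def)
    have "\<exists>t<Suc k. l \<in> ?L t \<and> l \<notin> ?L (Suc t)"
      by (rule step_exists[of "\<lambda>t. l \<in> ?L t"]) (use l Lk Ls0 in auto)
    then obtain t where t: "t < Suc k" "l \<in> ?L t" "l \<notin> ?L (Suc t)" by blast
    have c: "4 * card (nbr h D l \<inter> nbrs h D (?J t)) \<le> D"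
      using t LsS[of h D n J t] by auto
    have "nbr h D l \<inter> ?R \<subseteq> nbr h D l \<inter> nbrs h D (?J t)"
    proof
      fix x assume x: "x \<in> nbr h D l \<inter> ?R"
      then obtain s where s: "s < k" "x \<in> nbrs h D (?J s)" "x \<notin> nbrs h D (?L (Suc s))"
        unfolding Rset_def by blast
      show "x \<in> nbr h D l \<inter> nbrs h D (?J t)"
      proof (cases "s < t")
        case True
        hence "l \<in> ?L (Suc s)" using Ls_mono[of "Suc s" t h D n J] t by auto
        hence False using s x nbr_sub_nbrs[of l "?L (Suc s)" h D] by blast
        thus ?thesis ..
      next
        case False
        thus ?thesis using s x nbrs_mono[OF Js_mono[of t s h D n J]] by auto
      qed
    qed
    hence "card (nbr h D l \<inter> ?R) \<le> card (nbr h D l \<inter> nbrs h D (?J t))"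
      by (intro card_mono) auto
    thus ?thesis using c by linarith
  qed
qed



definition pr :: "nat \<Rightarrow> nat \<Rightarrow> nat \<times> nat" where "pr M q = (q div M, q mod M)"

definition ind :: "nat \<Rightarrow> nat \<Rightarrow> (nat \<times> nat) set \<Rightarrow> nat \<Rightarrow> real" where
  "ind D M A q = (if q < D * M \<and> pr M q \<in> A then 1 else 0)"

lemma card_pre_pr:
  assumes M: "0 < M" and A: "A \<subseteq> {..<D} \<times> {..<M}"
  shows "card {q\<in>{..<D*M}. pr M q \<in> A} = card A"
proof -
  have inj: "inj_on (pr M) {..<D*M}"
    unfolding inj_on_def pr_def by (metis div_mult_mod_eq prod.inject)
  have "pr M ` {q\<in>{..<D*M}. pr M q \<in> A} = A"
  proof
    show "pr M ` {q \<in> {..<D * M}. pr M q \<in> A} \<subseteq> A" by auto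
  next
    show "A \<subseteq> pr M ` {q \<in> {..<D * M}. pr M q \<in> A}"
    proof
      fix x assume x: "x \<in> A"
      obtain i y where xy: "x = (i, y)" by force
      have iy: "i < D" "y < M" using A x xy by auto
      have "i * M + y < D * M"
      proof -
        have "i * M + y < i * M + M" using iy by simp
        also have "\<dots> = (i + 1) * M" by simp
        also have "\<dots> \<le> D * M" using iy by (intro mult_right_mono) auto
        finally show ?thesis .
      qed
      moreover have "pr M (i * M + y) = x" unfolding pr_def xy using iy by simp
      ultimately show "x \<in> pr M ` {q \<in> {..<D * M}. pr M q \<in> A}" using x by force
    qed
  qed
  moreover have "inj_on (pr M) {q\<in>{..<D*M}. pr M q \<in> A}" using inj by (rule inj_on_subset) auto
  ultimately show ?thesis by (metis card_image)
qed

lemma sum_ind: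
  assumes M: "0 < M" and A: "A \<subseteq> {..<D} \<times> {..<M}"
  shows "(\<Sum>q<D*M. ind D M A q) = real (card A)"
proof -
  have "(\<Sum>q<D*M. ind D M A q) = (\<Sum>q\<in>{q\<in>{..<D*M}. pr M q \<in> A}. 1)"
    unfolding ind_def by (subst sum.inter_filter[symmetric]) auto
  also have "\<dots> = real (card A)" using card_pre_pr[OF M A] by simp
  finally show ?thesis .
qed

lemma sum_ind2:
  assumes M: "0 < M" and A: "A \<subseteq> {..<D} \<times> {..<M}" and B: "B \<subseteq> {..<D} \<times> {..<M}"
  shows "(\<Sum>q<D*M. ind D M A q * ind D M B q) = real (card (A \<inter> B))"
proof -
  have "(\<Sum>q<D*M. ind D M A q * ind D M B q) = (\<Sum>q<D*M. ind D M (A \<inter> B) q)"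
    by (rule sum.cong) (auto simp: ind_def)
  thus ?thesis using sum_ind[OF M, of "A \<inter> B" D] A by auto
qed

lemma ip_split: "ip (Suc m) x y = (\<Sum>q<m. x q * y q) + x m * y m"
  unfolding ip_def by simp

definition Vv :: "(nat \<times> nat \<Rightarrow> nat) \<Rightarrow> nat \<Rightarrow> nat \<Rightarrow> nat \<Rightarrow> nat \<Rightarrow> real" where
  "Vv h D M l q = ind D M (nbr h D l) q / sqrt (2 * D) + (if q = D * M then 1 / sqrt 2 else 0)"

definition nU :: "(nat \<times> nat \<Rightarrow> nat) \<Rightarrow> nat \<Rightarrow> nat \<Rightarrow> nat \<Rightarrow> nat set \<Rightarrow> real" where
  "nU h D n k J = sqrt (real (card (Rset h D n J k)) + real D / 4)"

definition Uu :: "(nat \<times> nat \<Rightarrow> nat) \<Rightarrow> nat \<Rightarrow> nat \<Rightarrow> nat \<Rightarrow> nat \<Rightarrow> nat set \<Rightarrow> nat \<Rightarrow> real" where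
  "Uu h D M n k J q = (ind D M (Rset h D n J k) q - (if q = D * M then sqrt D / 2 else 0)) / nU h D n k J"

lemma ind_out: "ind D M A (D * M) = 0" unfolding ind_def by simp

lemma embedding_from_good:
  assumes g: "good h n D k" and k: "1 \<le> k" and D: "0 < D" and M: "0 < M"
    and hM: "\<And>l i. l < n \<Longrightarrow> i < D \<Longrightarrow> h (l, i) < M"
  shows "margin_embedding (S_rows n k) n S_entry (1 / (8 * sqrt k)) (Suc (D * M)) (Uu h D M n k) (Vv h D M)"
proof -
  have nbr_grid: "nbr h D l \<subseteq> {..<D} \<times> {..<M}" if "l < n" for l
    using hM that unfolding nbr_def by auto
  have sD: "sqrt (2 * real D) > 0" using D by simp
  have Vq: "Vv h D M l q = ind D M (nbr h D l) q / sqrt (2 * D)" if "q < D * M" for l q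
    using that unfolding Vv_def by simp
  have Vlast: "Vv h D M l (D * M) = 1 / sqrt 2" for l
    unfolding Vv_def by (simp add: ind_out)
  have unitV: "unit_vec (Suc (D * M)) (Vv h D M l)" if l: "l < n" for l
  proof -
    have "(\<Sum>q<D*M. Vv h D M l q * Vv h D M l q) = (\<Sum>q<D*M. ind D M (nbr h D l) q * ind D M (nbr h D l) q) / (2 * D)"
      by (simp add: Vq sum_divide_distrib)
    also have "\<dots> = real D / (2 * D)"
      using sum_ind2[OF M nbr_grid[OF l] nbr_grid[OF l]] by (simp add: card_nbr)
    also have "\<dots> = 1 / 2" using D by simp
    moreover have "(1 / sqrt 2) * (1 / sqrt 2) = (1/2::real)" by simp
    ultimately show ?thesis unfolding unit_vec_def ip_split Vlast by linarith
  qed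
  have main: "unit_vec (Suc (D * M)) (Uu h D M n k J) \<and>
      (\<forall>i<n. (S_entry J i \<longrightarrow> 1 / (8 * sqrt k) \<le> ip (Suc (D * M)) (Uu h D M n k J) (Vv h D M i)) \<and>
             (\<not> S_entry J i \<longrightarrow> ip (Suc (D * M)) (Uu h D M n k J) (Vv h D M i) \<le> - (1 / (8 * sqrt k))))"
    if J: "J \<in> S_rows n k" for J
  proof -
    have J1: "J \<subseteq> {..<n}" and J2: "card J = k" using J unfolding S_rows_def by auto
    have fJ: "finite J" using J1 finite_subset by blast
    let ?R = "Rset h D n J k"
    note RP = Rset_props[OF g k D J1, unfolded J2, OF order.refl]
    have Rgrid: "?R \<subseteq> {..<D} \<times> {..<M}" using RP(1) J1 nbr_grid unfolding nbrs_def by blast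
    have cR: "card ?R \<le> D * k"
      using card_mono[OF finite_nbrs[OF fJ] RP(1)] card_nbrs_le[OF fJ, of h D] J2 by simp
    define N where "N = nU h D n k J"
    have N2: "N * N = real (card ?R) + real D / 4" unfolding N_def nU_def by simp
    have Npos: "N > 0" unfolding N_def nU_def using D by simp
    have Uq: "Uu h D M n k J q = ind D M ?R q / N" if "q < D * M" for q
      using that unfolding Uu_def N_def by simp
    have Ulast: "Uu h D M n k J (D * M) = - (sqrt D / 2) / N"
      unfolding Uu_def N_def by (simp add: ind_out)
    have unitU: "unit_vec (Suc (D * M)) (Uu h D M n k J)"
    proof -
      have "(\<Sum>q<D*M. Uu h D M n k J q * Uu h D M n k J q) = (\<Sum>q<D*M. ind D M ?R q * ind D M ?R q) / (N * N)"
        by (simp add: Uq sum_divide_distrib)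
      also have "\<dots> = real (card ?R) / (N * N)"
        using sum_ind2[OF M Rgrid Rgrid] by simp
      finally have "ip (Suc (D * M)) (Uu h D M n k J) (Uu h D M n k J) = real (card ?R) / (N * N) + (real D / 4) / (N * N)"
        unfolding ip_split Ulast using D by (simp add: power2_eq_square)
      also have "\<dots> = (real (card ?R) + real D / 4) / (N * N)" by (simp add: add_divide_distrib)
      also have "\<dots> = 1" using N2 Npos by (metis divide_self mult_pos_pos order_less_irrefl)
      finally show ?thesis unfolding unit_vec_def .
    qed
    have ipf: "ip (Suc (D * M)) (Uu h D M n k J) (Vv h D M i) = (real (card (nbr h D i \<inter> ?R)) - real D / 2) / (sqrt (2 * D) * N)"
      if i: "i < n" for i
    proof -
      have "(\<Sum>q<D*M. Uu h D M n k J q * Vv h D M i q) = (\<Sum>q<D*M. ind D M ?R q * ind D M (nbr h D i) q) / (N * sqrt (2 * D))"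
        by (simp add: Uq Vq sum_divide_distrib)
      also have "\<dots> = real (card (nbr h D i \<inter> ?R)) / (N * sqrt (2 * D))"
        using sum_ind2[OF M Rgrid nbr_grid[OF i]] by (simp add: Int_commute)
      finally have e1: "(\<Sum>q<D*M. Uu h D M n k J q * Vv h D M i q) = real (card (nbr h D i \<inter> ?R)) / (N * sqrt (2 * D))" .
      have e2: "sqrt (real D) / 2 * (1 / sqrt 2) = (real D / 2) / sqrt (2 * D)"
        using D by (simp add: real_sqrt_mult field_simps)
      show ?thesis unfolding ip_split e1 Ulast Vlast
        using e2 Npos sD by (simp add: field_simps)
    qed
    have key: "real D / 4 / (sqrt (2 * D) * N) \<ge> 1 / (8 * sqrt k)"
    proof -
      have kpos: "sqrt (real k) > 0" using k by simp
      have s2: "sqrt (2 * real D) * sqrt (2 * real D) = 2 * real D" using D by simp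
      have "(sqrt (2 * D) * N)^2 = (sqrt (2 * real D) * sqrt (2 * real D)) * (N * N)"
        by (simp add: power2_eq_square algebra_simps)
      also have "\<dots> = 2 * D * (real (card ?R) + real D / 4)" using s2 N2 by simp
      also have "\<dots> \<le> 2 * D * (real D * k + real D / 4)"
        using cR by (intro mult_left_mono) (simp_all add: of_nat_mult[symmetric] del: of_nat_mult)
      also have "\<dots> = 2 * (real D * real D) * real k + (real D * real D) / 2" by (simp add: algebra_simps)
      also have "\<dots> \<le> 4 * (real D * real D) * real k"
      proof -
        define X where "X = real D * real D"
        have "X * 1 \<le> X * real k" unfolding X_def using k by (intro mult_left_mono) auto
        hence "X \<le> X * real k" by simp
        moreover have "X \<ge> 0" unfolding X_def by simp
        moreover have "2 * X * real k = 2 * (X * real k)" "4 * X * real k = 4 * (X * real k)" by simp_all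
        ultimately have "2 * X * real k + X / 2 \<le> 4 * X * real k" by linarith
        thus ?thesis unfolding X_def .
      qed
      also have "\<dots> = (2 * D * sqrt k)^2"
      proof -
        have "(2 * D * sqrt k)^2 = 4 * (real D * real D) * (sqrt k)^2"
          unfolding power2_eq_square by (simp only: mult_ac) simp
        thus ?thesis by simp
      qed
      finally have sq: "(sqrt (2 * D) * N)^2 \<le> (2 * D * sqrt k)^2" .
      have "sqrt (2 * D) * N \<le> 2 * D * sqrt k"
        by (rule power2_le_imp_le[OF sq]) (use kpos in simp)
      hence P: "sqrt (2 * D) * N \<le> 2 * D * sqrt k" .
      have Ppos: "sqrt (2 * D) * N > 0" using Npos sD by (simp add: mult_pos_pos)
      have "1 / (8 * sqrt k) = (real D / 4) / (2 * D * sqrt k)" using D kpos by (simp add: field_simps)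
      also have "\<dots> \<le> (real D / 4) / (sqrt (2 * D) * N)"
        by (rule divide_left_mono[OF P]) (use Ppos D kpos in auto)
      finally show ?thesis .
    qed
    show ?thesis
    proof (intro conjI unitU allI impI)
      fix i assume i: "i < n" and e: "S_entry J i"
      have "3 * D \<le> 4 * card (nbr h D i \<inter> ?R)" using RP(2) e unfolding S_entry_def by blast
      hence "real D / 4 \<le> real (card (nbr h D i \<inter> ?R)) - real D / 2" by linarith
      hence "real D / 4 / (sqrt (2 * D) * N) \<le> (real (card (nbr h D i \<inter> ?R)) - real D / 2) / (sqrt (2 * D) * N)"
        using Npos sD by (intro divide_right_mono) auto
      thus "1 / (8 * sqrt k) \<le> ip (Suc (D * M)) (Uu h D M n k J) (Vv h D M i)" using key ipf[OF i] by linarith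
    next
      fix i assume i: "i < n" and e: "\<not> S_entry J i"
      have "4 * card (nbr h D i \<inter> ?R) \<le> D" using RP(3) e i unfolding S_entry_def by blast
      hence "real (card (nbr h D i \<inter> ?R)) - real D / 2 \<le> - (real D / 4)" by linarith
      hence "(real (card (nbr h D i \<inter> ?R)) - real D / 2) / (sqrt (2 * D) * N) \<le> - (real D / 4) / (sqrt (2 * D) * N)"
        using Npos sD by (intro divide_right_mono) auto
      also have "- (real D / 4) / (sqrt (2 * D) * N) = - (real D / 4 / (sqrt (2 * D) * N))" by simp
      also have "\<dots> \<le> - (1 / (8 * sqrt k))" using key by (rule le_imp_neg_le)
      finally show "ip (Suc (D * M)) (Uu h D M n k J) (Vv h D M i) \<le> - (1 / (8 * sqrt k))" using ipf[OF i] by simp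
    qed
  qed
  show ?thesis unfolding margin_embedding_def using main unitV by blast
qed



lemma pow_le_exp_fact: "(real t) ^ t \<le> exp (real t) * fact t"
proof -
  have s: "(\<lambda>n. real t ^ n /\<^sub>R fact n) sums exp (real t)" by (rule exp_converges)
  have "real t ^ t / fact t \<le> exp (real t)"
    using sum_le_suminf[OF sums_summable[OF s], of "{t}"] sums_unique[OF s]
    by (simp add: divide_inverse mult.commute)
  thus ?thesis by (simp add: divide_le_eq mult.commute)
qed

lemma amgm:
  fixes x :: "nat \<Rightarrow> real"
  assumes "0 < D" and "\<And>i. i < D \<Longrightarrow> 0 \<le> x i"
  shows "(\<Prod>i<D. x i) \<le> ((\<Sum>i<D. x i) / D) ^ D"
proof -
  have "(\<Prod>i<D. x i) powr (1 / card {..<D}) \<le> (\<Sum>i<D. x i / card {..<D})"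
    using arith_geom_mean[of "{..<D}" x] assms by auto
  hence a: "(\<Prod>i<D. x i) powr (1 / D) \<le> (\<Sum>i<D. x i) / D" by (simp add: sum_divide_distrib)
  have p0: "(\<Prod>i<D. x i) \<ge> 0" using assms by (intro prod_nonneg) auto
  have "(\<Prod>i<D. x i) = ((\<Prod>i<D. x i) powr (1 / D)) ^ D"
  proof (cases "(\<Prod>i<D. x i) = 0")
    case True show ?thesis unfolding True using assms(1) by simp
  next
    case False
    hence "(\<Prod>i<D. x i) > 0" using p0 by linarith
    hence pp: "(\<Prod>i<D. x i) powr (1 / D) > 0" by (simp only: powr_gt_zero)
    have "((\<Prod>i<D. x i) powr (1 / D)) ^ D = ((\<Prod>i<D. x i) powr (1 / D)) powr (real D)"
      using powr_realpow[OF pp] by simp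
    also have "\<dots> = (\<Prod>i<D. x i) powr (1 / D * D)" by (simp add: powr_powr)
    also have "\<dots> = (\<Prod>i<D. x i)" using assms(1) \<open>(\<Prod>i<D. x i) > 0\<close> by simp
    finally show ?thesis by simp
  qed
  also have "\<dots> \<le> ((\<Sum>i<D. x i) / D) ^ D"
    by (rule power_mono[OF a]) simp
  finally show ?thesis .
qed



lemma binom_pow_bound:
  "real (N choose t) * real t ^ t \<le> exp 1 ^ t * real N ^ t"
proof -
  have a: "real (N choose t) * fact t \<le> real N ^ t"
    using binomial_fact_pow[of N t] by (metis of_nat_fact of_nat_le_iff of_nat_mult of_nat_power)
  have b: "real t ^ t \<le> exp 1 ^ t * fact t"
    using pow_le_exp_fact[of t] by (simp add: exp_of_nat_mult[symmetric])
  have "real (N choose t) * real t ^ t \<le> real (N choose t) * (exp 1 ^ t * fact t)"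
    by (rule mult_left_mono[OF b]) simp
  also have "\<dots> = exp 1 ^ t * (real (N choose t) * fact t)" by simp
  also have "\<dots> \<le> exp 1 ^ t * real N ^ t"
    by (rule mult_left_mono[OF a]) simp
  finally show ?thesis .
qed

lemma term_bound:
  fixes n k a s :: nat
  assumes k: "1 \<le> k" and a: "1 \<le> a" and s: "1 \<le> s" "s \<le> 2 * k"
    and hyp: "exp 1 * real n \<le> real k * exp 1 ^ a"
  shows "real (n choose s) * real ((12 * a * (2 * 3 ^ 12 * k)) choose (11 * a * s))
          * (real (11 * a * s) / real (12 * a * (2 * 3 ^ 12 * k))) ^ (12 * a * s) \<le> (1 / 2) ^ s"
proof -
  define E :: real where "E = exp 1"
  define K :: real where "K = 2 * 3 ^ 12"
  define M :: real where "M = K * k"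
  define N :: nat where "N = 12 * a * (2 * 3 ^ 12 * k)"
  define t :: nat where "t = 11 * a * s"
  define q :: real where "q = real t / real N"
  define x :: real where "x = real s / M"
  have E0: "E > 0" unfolding E_def by simp
  have E3: "E \<le> 3" unfolding E_def by (rule exp_le)
  have K0: "K > 0" unfolding K_def by simp
  have M0: "M > 0" unfolding M_def using K0 k by simp
  have NM: "real N = 12 * a * M" unfolding N_def M_def K_def by simp
  have N0: "real N > 0" using NM M0 a by simp
  have t0: "real t > 0" unfolding t_def using a s by simp
  have q0: "q \<ge> 0" unfolding q_def by simp
  have qx: "q \<le> x"
  proof -
    have "q = (11 / 12) * x" unfolding q_def x_def t_def NM using a by (simp add: field_simps)
    moreover have "x \<ge> 0" unfolding x_def using M0 by simp
    ultimately show ?thesis by simp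
  qed
  have B1: "real (N choose t) * q ^ t \<le> E ^ t"
  proof -
    have "real (N choose t) * q ^ t = real (N choose t) * real t ^ t / real N ^ t"
      unfolding q_def by (simp add: power_divide)
    also have "\<dots> \<le> E ^ t * real N ^ t / real N ^ t"
      using binom_pow_bound[of N t] N0 unfolding E_def by (intro divide_right_mono) auto
    also have "\<dots> = E ^ t" using N0 by simp
    finally show ?thesis .
  qed
  have B2: "real (n choose s) \<le> (E * real n / real s) ^ s"
  proof -
    have "real (n choose s) = real (n choose s) * real s ^ s / real s ^ s" using s by simp
    also have "\<dots> \<le> E ^ s * real n ^ s / real s ^ s"
      using binom_pow_bound[of n s] unfolding E_def by (intro divide_right_mono) auto
    also have "\<dots> = (E * real n / real s) ^ s" by (simp add: power_divide power_mult_distrib)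
    finally show ?thesis .
  qed
  have qsplit: "q ^ (12 * a * s) = q ^ t * q ^ (a * s)"
    unfolding t_def by (simp add: power_add[symmetric] algebra_simps)
  have qa: "q ^ (a * s) \<le> x ^ (a * s)" by (rule power_mono[OF qx q0])
  have "real (n choose s) * real (N choose t) * q ^ (12 * a * s)
        = real (n choose s) * (real (N choose t) * q ^ t) * q ^ (a * s)"
    unfolding qsplit by simp
  also have "\<dots> \<le> (E * real n / real s) ^ s * E ^ t * x ^ (a * s)"
    using E0 by (intro mult_mono B1 B2 qa) (auto simp: q0 zero_le_mult_iff)
  also have "\<dots> = ((E * real n / real s) * E ^ (11 * a) * x ^ a) ^ s"
  proof -
    have e1: "(E ^ (11 * a)) ^ s = E ^ t" unfolding t_def by (simp add: power_mult)
    have e2: "(x ^ a) ^ s = x ^ (a * s)" by (simp add: power_mult)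
    show ?thesis unfolding power_mult_distrib e1 e2 ..
  qed
  also have "\<dots> \<le> (1 / 2) ^ s"
  proof (rule power_mono)
    show "0 \<le> E * real n / real s * E ^ (11 * a) * x ^ a"
      using E0 unfolding x_def using M0 by simp
    have xa: "x ^ a = real s ^ a / (K ^ a * real k ^ a)"
      unfolding x_def M_def by (simp add: power_divide power_mult_distrib)
    have sa: "real s ^ a / real s = real s ^ (a - 1)"
      using s a by (simp add: power_diff)
    have sb: "real s ^ (a - 1) \<le> (2 * real k) ^ (a - 1)"
      using s by (intro power_mono) auto
    have "E * real n / real s * E ^ (11 * a) * x ^ a = E * real n * E ^ (11 * a) * (real s ^ a / real s) / (K ^ a * real k ^ a)"
      unfolding xa by simp
    also have "\<dots> = E * real n * E ^ (11 * a) * real s ^ (a - 1) / (K ^ a * real k ^ a)"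
      unfolding sa ..
    also have "\<dots> \<le> E * real n * E ^ (11 * a) * (2 * real k) ^ (a - 1) / (K ^ a * real k ^ a)"
      using sb E0 K0 k by (intro divide_right_mono mult_left_mono) auto
    also have "\<dots> \<le> real k * E ^ a * E ^ (11 * a) * (2 * real k) ^ (a - 1) / (K ^ a * real k ^ a)"
      using hyp E0 K0 k unfolding E_def by (intro divide_right_mono mult_right_mono) auto
    also have "\<dots> = (2 * E ^ 12) ^ a / K ^ a / 2"
    proof -
      have "(2 * real k) ^ a = (2 * real k) * (2 * real k) ^ (a - 1)"
        using a by (metis Suc_diff_le diff_Suc_1 power_Suc)
      hence p: "(2 * real k) ^ (a - 1) = (2 * real k) ^ a / (2 * real k)" using k by simp
      show ?thesis unfolding p using k K0 E0
        by (simp add: power_mult_distrib power_mult[symmetric] power_add[symmetric] field_simps)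
    qed
    also have "\<dots> \<le> 1 / 2"
    proof -
      have "E ^ 12 \<le> 3 ^ 12" using E3 E0 by (intro power_mono) auto
      hence "2 * E ^ 12 \<le> K" unfolding K_def by simp
      hence "(2 * E ^ 12) ^ a \<le> K ^ a" using E0 by (intro power_mono) auto
      thus ?thesis using K0 by simp
    qed
    finally show "E * real n / real s * E ^ (11 * a) * x ^ a \<le> 1 / 2" .
  qed
  finally show ?thesis unfolding q_def N_def t_def by simp
qed



lemma card_bad:
  fixes n D M s :: nat
  assumes D: "0 < D" and S: "S \<subseteq> {..<n}" "card S = s" and Y: "Y \<subseteq> {..<D} \<times> {..<M}"
  shows "real (card {h \<in> PiE ({..<n} \<times> {..<D}) (\<lambda>_. {..<M}). \<forall>l\<in>S. \<forall>i<D. (i, h (l, i)) \<in> Y})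
         \<le> (real (card Y) / D) ^ (D * s) * real M ^ (D * (n - s))"
proof -
  define Yb where "Yb i = {y. (i, y) \<in> Y}" for i
  define B where "B x = (if fst x \<in> S then Yb (snd x) else {..<M})" for x :: "nat \<times> nat"
  define A where "A = {..<n} \<times> {..<D}"
  have Yb_sub: "Yb i \<subseteq> {..<M}" if "i < D" for i using Y that unfolding Yb_def by auto
  have eq: "{h \<in> PiE A (\<lambda>_. {..<M}). \<forall>l\<in>S. \<forall>i<D. (i, h (l, i)) \<in> Y} = PiE A B"
  proof (intro set_eqI iffI)
    fix h assume h: "h \<in> {h \<in> PiE A (\<lambda>_. {..<M}). \<forall>l\<in>S. \<forall>i<D. (i, h (l, i)) \<in> Y}"
    show "h \<in> PiE A B"
      using h unfolding PiE_iff B_def Yb_def A_def by auto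
  next
    fix h assume h: "h \<in> PiE A B"
    have "h \<in> PiE A (\<lambda>_. {..<M})"
      using h Yb_sub unfolding PiE_iff B_def A_def by (auto split: if_splits)
    moreover have "\<forall>l\<in>S. \<forall>i<D. (i, h (l, i)) \<in> Y"
    proof (intro ballI allI impI)
      fix l i assume "l \<in> S" "i < D"
      hence "(l, i) \<in> A" using S unfolding A_def by auto
      hence "h (l, i) \<in> B (l, i)" using h unfolding PiE_iff by blast
      thus "(i, h (l, i)) \<in> Y" using \<open>l \<in> S\<close> unfolding B_def Yb_def by simp
    qed
    ultimately show "h \<in> {h \<in> PiE A (\<lambda>_. {..<M}). \<forall>l\<in>S. \<forall>i<D. (i, h (l, i)) \<in> Y}" by blast
  qed
  define P where "P = (\<Prod>i<D. card (Yb i))"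
  have "card (PiE A B) = (\<Prod>x\<in>A. card (B x))" unfolding A_def by (rule card_PiE) auto
  also have "\<dots> = (\<Prod>l<n. \<Prod>i<D. card (B (l, i)))"
    unfolding A_def by (subst prod.cartesian_product) simp
  also have "\<dots> = (\<Prod>l<n. if l \<in> S then P else M ^ D)"
    unfolding B_def P_def by (intro prod.cong) auto
  also have "\<dots> = P ^ s * (M ^ D) ^ (n - s)"
  proof -
    have c1: "card ({..<n} \<inter> S) = s" using S by (simp add: Int_absorb1)
    have "{..<n} \<inter> - S = {..<n} - S" by auto
    hence c2: "card ({..<n} \<inter> - S) = n - s" using S card_Diff_subset[of S "{..<n}"]
      by (metis card_lessThan finite_subset finite_lessThan)
    show ?thesis by (simp add: prod.If_cases c1 c2)
  qed
  finally have c: "card (PiE A B) = P ^ s * (M ^ D) ^ (n - s)" .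
  have sumY: "(\<Sum>i<D. real (card (Yb i))) = real (card Y)"
  proof -
    have "Y = Sigma {..<D} Yb" using Y unfolding Yb_def by auto
    moreover have "card (Sigma {..<D} Yb) = (\<Sum>i<D. card (Yb i))"
      by (rule card_SigmaI) (auto intro: finite_subset[OF Yb_sub])
    ultimately show ?thesis by simp
  qed
  have PY: "real P \<le> (real (card Y) / D) ^ D"
    unfolding P_def of_nat_prod sumY[symmetric] by (rule amgm[OF D]) simp
  have "real (card (PiE A B)) = real P ^ s * real M ^ (D * (n - s))"
    unfolding c by (simp add: power_mult)
  also have "\<dots> \<le> ((real (card Y) / D) ^ D) ^ s * real M ^ (D * (n - s))"
    by (intro mult_right_mono power_mono PY) auto
  also have "\<dots> = (real (card Y) / D) ^ (D * s) * real M ^ (D * (n - s))"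
    by (simp add: power_mult)
  finally show ?thesis unfolding eq[unfolded A_def, symmetric] A_def .
qed

lemma geom_half: "(\<Sum>s\<in>{1..m}. (1 / 2 :: real) ^ s) = 1 - (1 / 2) ^ m"
  by (induction m) (auto simp: sum.atLeast_Suc_atMost_Suc_shift atLeastAtMostSuc_conv)



lemma exists_good:
  fixes n k a :: nat
  assumes k: "1 \<le> k" and a: "1 \<le> a" and hyp: "exp 1 * real n \<le> real k * exp 1 ^ a"
  shows "\<exists>h. good h n (12 * a) k \<and> (\<forall>l<n. \<forall>i<12 * a. h (l, i) < 2 * 3 ^ 12 * k)"
proof (rule ccontr)
  assume nex: "\<not> ?thesis"
  define D where "D = 12 * a"
  define M where "M = 2 * 3 ^ 12 * k"
  define A where "A = {..<n} \<times> {..<D}"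
  define G where "G = {..<D} \<times> {..<M}"
  define H where "H = PiE A (\<lambda>_. {..<M})"
  define Bad where "Bad S Y = {h \<in> H. \<forall>l\<in>S. \<forall>i<D. (i, h (l, i)) \<in> Y}" for S Y
  define SS where "SS s = {S. S \<subseteq> {..<n} \<and> card S = s}" for s
  define YY where "YY s = {Y. Y \<subseteq> G \<and> card Y = 11 * a * s}" for s
  have D0: "0 < D" unfolding D_def using a by simp
  have M0: "0 < M" unfolding M_def using k by simp
  have cG: "card G = D * M" unfolding G_def by (simp add: card_cartesian_product)
  have fG: "finite G" unfolding G_def by simp
  have cover: "H \<subseteq> (\<Union>s\<in>{1..2*k}. \<Union>S\<in>SS s. \<Union>Y\<in>YY s. Bad S Y)"
  proof
    fix h assume hH: "h \<in> H"
    have hM: "\<forall>l<n. \<forall>i<D. h (l, i) < M" using hH unfolding H_def A_def PiE_iff by auto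
    hence ng: "\<not> good h n D k" using nex unfolding D_def M_def by blast
    then obtain S where S: "S \<subseteq> {..<n}" "card S \<le> 2 * k" "12 * card (nbrs h D S) < 11 * D * card S"
      unfolding good_def by (auto simp: not_le)
    define s where "s = card S"
    have s1: "1 \<le> s" using S(3) unfolding s_def by (cases "card S") auto
    have cN: "card (nbrs h D S) \<le> 11 * a * s" using S(3) unfolding s_def D_def by linarith
    have NG: "nbrs h D S \<subseteq> G" using hM S(1) unfolding nbrs_def nbr_def G_def by auto
    have tG: "11 * a * s \<le> card G"
    proof -
      have "11 * a * s \<le> 12 * a * (2 * k)" using S(2) unfolding s_def
        by (intro mult_mono) auto
      also have "\<dots> \<le> D * M" unfolding D_def M_def by simp
      finally show ?thesis using cG by simp
    qed
    obtain Y where Y: "nbrs h D S \<subseteq> Y" "Y \<subseteq> G" "card Y = 11 * a * s"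
      using exists_subset_between[OF cN tG NG fG] by blast
    have "h \<in> Bad S Y"
      unfolding Bad_def using hH Y(1) nbr_sub_nbrs[of _ S h D] unfolding nbr_def by blast
    moreover have "S \<in> SS s" unfolding SS_def s_def using S by simp
    moreover have "Y \<in> YY s" unfolding YY_def using Y by simp
    moreover have "s \<in> {1..2*k}" using s1 S(2) unfolding s_def by simp
    ultimately show "h \<in> (\<Union>s\<in>{1..2*k}. \<Union>S\<in>SS s. \<Union>Y\<in>YY s. Bad S Y)" by blast
  qed
  have fSS: "finite (SS s)" for s unfolding SS_def by (rule finite_subset[of _ "Pow {..<n}"]) auto
  have fYY: "finite (YY s)" for s unfolding YY_def by (rule finite_subset[of _ "Pow G"]) (auto simp: fG)
  have cSS: "card (SS s) = n choose s" for s unfolding SS_def using n_subsets[of "{..<n}" s] by simp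
  have cYY: "card (YY s) = (D * M) choose (11 * a * s)" for s
    unfolding YY_def using n_subsets[OF fG, of "11 * a * s"] cG by simp
  have fH: "finite H" unfolding H_def A_def by (intro finite_PiE) auto
  have cH: "card H = M ^ (n * D)" unfolding H_def A_def by (simp add: card_PiE card_cartesian_product)
  have "card H \<le> card (\<Union>s\<in>{1..2*k}. \<Union>S\<in>SS s. \<Union>Y\<in>YY s. Bad S Y)"
    by (rule card_mono[OF _ cover]) (auto simp: fSS fYY Bad_def intro: finite_subset[OF _ fH])
  also have "\<dots> \<le> (\<Sum>s\<in>{1..2*k}. card (\<Union>S\<in>SS s. \<Union>Y\<in>YY s. Bad S Y))"
    by (rule card_UN_le) simp
  also have "\<dots> \<le> (\<Sum>s\<in>{1..2*k}. \<Sum>S\<in>SS s. \<Sum>Y\<in>YY s. card (Bad S Y))"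
    by (intro sum_mono order_trans[OF card_UN_le[OF fSS]] order_trans[OF card_UN_le[OF fYY]]) auto
  finally have c0: "real (card H) \<le> real (\<Sum>s\<in>{1..2*k}. \<Sum>S\<in>SS s. \<Sum>Y\<in>YY s. card (Bad S Y))"
    by (simp only: of_nat_le_iff)
  have c1: "real (card H) \<le> (\<Sum>s\<in>{1..2*k}. \<Sum>S\<in>SS s. \<Sum>Y\<in>YY s. real (card (Bad S Y)))"
    using c0 by (simp only: of_nat_sum)
  also have "\<dots> \<le> (\<Sum>s\<in>{1..2*k}. \<Sum>S\<in>SS s. \<Sum>Y\<in>YY s.
                     (real (11 * a * s) / D) ^ (D * s) * real M ^ (D * (n - s)))"
  proof (intro sum_mono)
    fix s S Y assume s: "s \<in> {1..2*k}" and SS: "S \<in> SS s" and YY: "Y \<in> YY s"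
    show "real (card (Bad S Y)) \<le> (real (11 * a * s) / D) ^ (D * s) * real M ^ (D * (n - s))"
      using card_bad[OF D0, of S n s Y M] SS YY unfolding Bad_def H_def A_def SS_def YY_def G_def
      by simp
  qed
  also have "\<dots> = (\<Sum>s\<in>{1..2*k}. real (n choose s) * real ((D * M) choose (11 * a * s)) *
                     ((real (11 * a * s) / D) ^ (D * s) * real M ^ (D * (n - s))))"
    by (simp add: cSS cYY mult.assoc)
  also have "\<dots> \<le> (\<Sum>s\<in>{1..2*k}. (1 / 2) ^ s * real M ^ (n * D))"
  proof (intro sum_mono)
    fix s assume s: "s \<in> {1..2*k}"
    show "real (n choose s) * real ((D * M) choose (11 * a * s)) *
            ((real (11 * a * s) / D) ^ (D * s) * real M ^ (D * (n - s))) \<le> (1 / 2) ^ s * real M ^ (n * D)"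
    proof (cases "s \<le> n")
      case False
      hence z: "n choose s = 0" by simp
      show ?thesis unfolding z by simp
    next
      case True
      have pw: "real M ^ (n * D) = real M ^ (D * s) * real M ^ (D * (n - s))"
        using True by (simp add: power_add[symmetric] algebra_simps)
      have "(real (11 * a * s) / D) ^ (D * s) * real M ^ (D * (n - s))
            = (real (11 * a * s) / real (D * M)) ^ (D * s) * real M ^ (n * D)"
        unfolding pw using M0 by (simp add: power_divide power_mult_distrib)
      moreover have "real (n choose s) * real ((D * M) choose (11 * a * s)) * (real (11 * a * s) / real (D * M)) ^ (D * s) \<le> (1 / 2) ^ s"
        using term_bound[OF k a _ _ hyp, of s] s unfolding D_def M_def by (simp add: mult.assoc)
      ultimately show ?thesis
        by (simp add: mult.assoc[symmetric]) (intro mult_right_mono; simp)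
    qed
  qed
  also have "\<dots> = (1 - (1 / 2) ^ (2 * k)) * real M ^ (n * D)"
    by (subst sum_distrib_right[symmetric]) (simp only: geom_half)
  also have "\<dots> < real M ^ (n * D)" using M0 by simp
  finally show False using cH by simp
qed



lemma ln2_ge: "1 / 2 \<le> ln (2::real)"
proof -
  have "exp (1 / 2 :: real) * exp (1 / 2) = exp 1" by (simp add: exp_add[symmetric])
  also have "\<dots> \<le> 3" by (rule exp_le)
  finally have "exp (1 / 2 :: real) * exp (1 / 2) \<le> 2 * 2" by simp
  hence "exp (1 / 2 :: real) \<le> 2"
    by (metis mult_mono exp_gt_zero less_le_not_le linorder_le_less_linear zero_le_numeral mult_strict_mono)
  thus ?thesis by (subst ln_ge_iff) auto
qed

theorem corollaryE1:
  shows "\<exists>C c::real. C > 0 \<and> c > 0 \<and>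
    (\<forall>n k::nat. 1 \<le> k \<and> 2 * k \<le> n \<longrightarrow>
       (\<exists>d U V. real d \<le> C * real k * ln (real n / real k) \<and>
          margin_embedding (S_rows n k) n S_entry (c / sqrt (real k)) d U V))"
proof -
  have main: "\<forall>n k::nat. 1 \<le> k \<and> 2 * k \<le> n \<longrightarrow>
       (\<exists>d U V. real d \<le> (2 + 120 * 3 ^ 12) * real k * ln (real n / real k) \<and>
          margin_embedding (S_rows n k) n S_entry ((1 / 8) / sqrt (real k)) d U V)"
  proof (intro allI impI)
  fix n k :: nat
  assume nk: "1 \<le> k \<and> 2 * k \<le> n"
  hence k: "1 \<le> k" and n: "2 * k \<le> n" by auto
  define L where "L = ln (real n / real k)"
  have k0: "real k > 0" using k by simp
  have nk2: "real n / real k \<ge> 2" using n k0 by (simp add: field_simps)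
  have L2: "L \<ge> 1 / 2"
  proof -
    have "ln 2 \<le> L" unfolding L_def using nk2 by (subst ln_le_cancel_iff) auto
    thus ?thesis using ln2_ge by linarith
  qed
  define a where "a = nat \<lceil>1 + L\<rceil>"
  have a1: "real a \<ge> 1 + L" unfolding a_def using L2 by linarith
  have a2: "real a \<le> 2 + L" unfolding a_def using L2 by linarith
  have a0: "1 \<le> a" using a1 L2 by linarith
  have hyp: "exp 1 * real n \<le> real k * exp 1 ^ a"
  proof -
    have "exp 1 ^ a = exp (real a)" by (simp add: exp_of_nat_mult[symmetric])
    also have "exp (1 + L) \<le> exp (real a)" using a1 by simp
    hence "exp 1 * (real n / real k) \<le> exp (real a)"
      unfolding L_def exp_add using nk2 by simp
    hence "exp 1 * real n \<le> real k * exp (real a)" using k0 by (simp add: field_simps)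
    ultimately show ?thesis by simp
  qed
  obtain h where h: "good h n (12 * a) k" "\<forall>l<n. \<forall>i<12 * a. h (l, i) < 2 * 3 ^ 12 * k"
    using exists_good[OF k a0 hyp] by blast
  define D where "D = 12 * a"
  define M where "M = 2 * 3 ^ 12 * k"
  have emb: "margin_embedding (S_rows n k) n S_entry (1 / (8 * sqrt k)) (Suc (D * M)) (Uu h D M n k) (Vv h D M)"
    by (rule embedding_from_good) (use h k a0 in \<open>auto simp: D_def M_def\<close>)
  show "\<exists>d U V. real d \<le> (2 + 120 * 3 ^ 12) * real k * ln (real n / real k) \<and>
          margin_embedding (S_rows n k) n S_entry ((1 / 8) / sqrt (real k)) d U V"
  proof (intro exI conjI)
    show "margin_embedding (S_rows n k) n S_entry (1 / 8 / sqrt (real k)) (Suc (D * M)) (Uu h D M n k) (Vv h D M)"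
      using emb by simp
    have "real (Suc (D * M)) = 1 + 24 * 3 ^ 12 * (real a * real k)"
      unfolding D_def M_def by simp
    also have "\<dots> \<le> 2 * (real k * L) + 24 * 3 ^ 12 * ((5 * L) * real k)"
    proof -
      have "1 \<le> 2 * (L * 1)" using L2 by simp
      also have "\<dots> \<le> 2 * (L * real k)" using k L2 by (intro mult_left_mono) auto
      finally have 1: "1 \<le> 2 * (L * real k)" .
      have "real a * real k \<le> (5 * L) * real k" using a2 L2 k0 by (intro mult_right_mono) auto
      hence 2: "real a * real k \<le> 5 * (L * real k)" by simp
      show ?thesis using 1 2 by (simp add: algebra_simps)
    qed
    also have "\<dots> = (2 + 120 * 3 ^ 12) * real k * ln (real n / real k)"
      unfolding L_def by (simp add: algebra_simps)
    finally show "real (Suc (D * M)) \<le> (2 + 120 * 3 ^ 12) * real k * ln (real n / real k)" .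
  qed
  qed
  show ?thesis
    apply (rule exI[of _ "2 + 120 * 3 ^ 12"], rule exI[of _ "1 / 8"])
    apply (intro conjI)
      apply simp
     apply simp
    by (rule main)
qed

end
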